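(* Let $\vec p,\vec s$ be $n$-tuples with entries in $[1,\infty]$, $1\le\alpha\le\infty$, with $\frac1n\sum_{i=1}^n\frac1{s_i}\le\frac1\alpha\le\frac1n\sum_{i=1}^n\frac1{p_i}$. Then there exist constants $0<c\le C$, independent of $f$ and $r$, such that for all $f\in L^1_{loc}(\mathbb R^n)$ and all $r>0$, $$c\,r^{-\sum_{i=1}^n\frac1{s_i}}\big\|\,\|f\chi_{B(\cdot,r)}\|_{L^{\vec p}}\big\|_{L^{\vec s}}\le\big\|\{\|f\chi_{Q_{r,k}}\|_{L^{\vec p}}\}_{k\in\mathbb Z^n}\big\|_{\ell^{\vec s}}\le C\,r^{-\sum_{i=1}^n\frac1{s_i}}\big\|\,\|f\chi_{B(\cdot,r)}\|_{L^{\vec p}}\big\|_{L^{\vec s}}.$$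
   Context: For $\vec p=(p_1,\dots,p_n)$ with $1\le p_i\le\infty$, $\|f\|_{L^{\vec p}}=\Big(\int_{\mathbb R}\cdots\Big(\int_{\mathbb R}|f(x)|^{p_1}\,dx_1\Big)^{p_2/p_1}\cdots dx_n\Big)^{1/p_n}$ (usual modification when some $p_i=\infty$). $B(y,r)$ is the open ball of center $y$ and radius $r$, $\chi_E$ the characteristic function of $E$; $\big\|\,\|f\chi_{B(\cdot,r)}\|_{L^{\vec p}}\big\|_{L^{\vec s}}$ is the $L^{\vec s}$-norm of $y\mapsto\|f\chi_{B(y,r)}\|_{L^{\vec p}}$. For $r>0$, $k\in\mathbb Z^n$, $Q_{r,k}=r(k+[0,1)^n)$, and for a sequence $\{a_k\}_{k\in\mathbb Z^n}$, $\|\{a_k\}\|_{\ell^{\vec s}}=\Big(\sum_{k_n\in\mathbb Z}\cdots\Big(\sum_{k_1\in\mathbb Z}|a_k|^{s_1}\Big)^{s_2/s_1}\cdots\Big)^{1/s_n}$ (usual modification for $s_i=\infty$). *)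

theory Defs
  imports "HOL-Analysis.Analysis"
begin

text \<open>Points of R^n are represented as extensional functions nat => real
  (coordinates 0..n-1, i.e. x_1..x_n), the carrier of PiM {..<n} (%_. lborel).\<close>

abbreviation Rn :: "nat \<Rightarrow> (nat \<Rightarrow> real) measure" where
  "Rn n \<equiv> PiM {..<n} (\<lambda>_. lborel)"

definition epow :: "ennreal \<Rightarrow> real \<Rightarrow> ennreal" where
  "epow x q = (if x = \<infinity> then \<infinity> else ennreal (enn2real x powr q))"

definition Lnorm1 :: "ennreal \<Rightarrow> (real \<Rightarrow> ennreal) \<Rightarrow> ennreal" where
  "Lnorm1 q h = (if q = \<infinity> then Inf {c. AE t in lborel. h t \<le> c}
     else epow (\<integral>\<^sup>+ t. epow (h t) (enn2real q) \<partial>lborel) (1 / enn2real q))"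

definition lnorm1 :: "ennreal \<Rightarrow> (int \<Rightarrow> ennreal) \<Rightarrow> ennreal" where
  "lnorm1 q a = (if q = \<infinity> then (SUP k. a k)
     else epow (\<integral>\<^sup>+ k. epow (a k) (enn2real q) \<partial>count_space UNIV) (1 / enn2real q))"

text \<open>Iterated mixed norm: mnorm k p g x takes the norms in the first k coordinates
  (coordinate 0 innermost, with exponent p 0), the other coordinates being those of x.\<close>
fun mnorm :: "nat \<Rightarrow> (nat \<Rightarrow> ennreal) \<Rightarrow> ((nat \<Rightarrow> real) \<Rightarrow> ennreal) \<Rightarrow> (nat \<Rightarrow> real) \<Rightarrow> ennreal" where
  "mnorm 0 p g x = g x"
| "mnorm (Suc k) p g x = Lnorm1 (p k) (\<lambda>t. mnorm k p g (x(k := t)))"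

definition Lmixed :: "nat \<Rightarrow> (nat \<Rightarrow> ennreal) \<Rightarrow> ((nat \<Rightarrow> real) \<Rightarrow> ennreal) \<Rightarrow> ennreal" where
  "Lmixed n p g = mnorm n p g (\<lambda>_. undefined)"

fun lmix :: "nat \<Rightarrow> (nat \<Rightarrow> ennreal) \<Rightarrow> ((nat \<Rightarrow> int) \<Rightarrow> ennreal) \<Rightarrow> (nat \<Rightarrow> int) \<Rightarrow> ennreal" where
  "lmix 0 s a k = a k"
| "lmix (Suc m) s a k = lnorm1 (s m) (\<lambda>j. lmix m s a (k(m := j)))"

definition lmixed :: "nat \<Rightarrow> (nat \<Rightarrow> ennreal) \<Rightarrow> ((nat \<Rightarrow> int) \<Rightarrow> ennreal) \<Rightarrow> ennreal" where
  "lmixed n s a = lmix n s a (\<lambda>_. undefined)"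

definition ballN :: "nat \<Rightarrow> (nat \<Rightarrow> real) \<Rightarrow> real \<Rightarrow> (nat \<Rightarrow> real) set" where
  "ballN n y r = {x \<in> space (Rn n). sqrt (\<Sum>i<n. (x i - y i)^2) < r}"

definition cubeN :: "nat \<Rightarrow> real \<Rightarrow> (nat \<Rightarrow> int) \<Rightarrow> (nat \<Rightarrow> real) set" where
  "cubeN n r k = {x \<in> space (Rn n). \<forall>i<n. r * of_int (k i) \<le> x i \<and> x i < r * (of_int (k i) + 1)}"

text \<open>Locally integrable functions on R^n: measurable and integrable on every
  bounded box [-R,R]^n (every compact set lies in such a box).\<close>
definition L1loc :: "nat \<Rightarrow> ((nat \<Rightarrow> real) \<Rightarrow> complex) \<Rightarrow> bool" where
  "L1loc n f \<longleftrightarrow> f \<in> borel_measurable (Rn n) \<and>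
     (\<forall>R>0. set_integrable (Rn n) {x \<in> space (Rn n). \<forall>i<n. \<bar>x i\<bar> \<le> R} f)"

end

theory Submission
  imports Defs
begin

lemma epow_inf[simp]: "epow top q = top" by (simp add: epow_def)

lemma epow_fin: "x \<noteq> \<infinity> \<Longrightarrow> epow x q = ennreal (enn2real x powr q)"
  by (simp add: epow_def)

lemma epow_ennreal: "0 \<le> a \<Longrightarrow> epow (ennreal a) q = ennreal (a powr q)"
  by (simp add: epow_def)

lemma epow_mono: assumes "x \<le> y" "0 \<le> q" shows "epow x q \<le> epow y q"
proof (cases "y = \<infinity>")
  case True then show ?thesis by simp
next
  case False
  then have "x \<noteq> \<infinity>" using assms(1) by (auto simp: top_unique)
  moreover have "enn2real x \<le> enn2real y" using assms(1) False
    by (simp add: enn2real_mono less_top)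
  ultimately show ?thesis using False assms(2)
    by (simp add: epow_fin ennreal_leI powr_mono2)
qed

lemma epow_zero[simp]: "0 < q \<Longrightarrow> epow 0 q = 0"
  by (simp add: epow_def)

lemma epow_epow: assumes "0 < q" shows "epow (epow x q) (1/q) = x"
proof (cases "x = \<infinity>")
  case True then show ?thesis by simp
next
  case False
  have "epow x q = ennreal (enn2real x powr q)" using False by (simp add: epow_fin)
  then have "epow (epow x q) (1/q) = ennreal ((enn2real x powr q) powr (1/q))"
    by (simp add: epow_ennreal)
  also have "\<dots> = ennreal (enn2real x)" using assms by (simp add: powr_powr)
  also have "\<dots> = x" using False by (simp add: less_top)
  finally show ?thesis .
qed

lemma epow_cmult: assumes "0 < c" "0 < q"
  shows "epow (ennreal c * x) q = ennreal (c powr q) * epow x q"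
proof (cases "x = \<infinity>")
  case True then show ?thesis using assms by (simp add: ennreal_mult_top)
next
  case False
  then obtain a where a: "x = ennreal a" "0 \<le> a" by (cases x) auto
  then show ?thesis using assms
    by (simp add: epow_ennreal ennreal_mult[symmetric] powr_mult)
qed

lemma real_powr_add_le: fixes a b q :: real assumes "0 \<le> a" "0 \<le> b" "0 < q"
  shows "(a + b) powr q \<le> 2 powr q * (a powr q + b powr q)"
proof -
  have "(a + b) powr q \<le> (2 * max a b) powr q"
    using assms by (intro powr_mono2) auto
  also have "\<dots> = 2 powr q * max a b powr q" using assms by (simp add: powr_mult)
  also have "\<dots> \<le> 2 powr q * (a powr q + b powr q)"
    by (intro mult_left_mono) (auto simp: max_def)
  finally show ?thesis .
qed

lemma epow_add: assumes "0 < q"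
  shows "epow (x + y) q \<le> ennreal (2 powr q) * (epow x q + epow y q)"
proof (cases "x = \<infinity> \<or> y = \<infinity>")
  case True then show ?thesis by (auto simp: ennreal_mult_top)
next
  case False
  then obtain a b where ab: "x = ennreal a" "0 \<le> a" "y = ennreal b" "0 \<le> b"
    by (cases x; cases y) auto
  have "(a + b) powr q \<le> 2 powr q * (a powr q + b powr q)"
    using ab assms by (intro real_powr_add_le) auto
  then show ?thesis using ab
    by (simp add: epow_ennreal ennreal_plus[symmetric] ennreal_mult[symmetric] del: ennreal_plus)
qed

lemma epow_measurable[measurable]:
  assumes [measurable]: "f \<in> borel_measurable M"
  shows "(\<lambda>x. epow (f x) q) \<in> borel_measurable M"
  unfolding epow_def by measurable

definition gnorm :: "'a measure \<Rightarrow> ennreal \<Rightarrow> ('a \<Rightarrow> ennreal) \<Rightarrow> ennreal" where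
  "gnorm M q h = (if q = \<infinity> then Inf {c. AE t in M. h t \<le> c}
     else epow (\<integral>\<^sup>+ t. epow (h t) (enn2real q) \<partial>M) (1 / enn2real q))"

lemma Lnorm1_gnorm: "Lnorm1 q h = gnorm lborel q h"
  by (simp add: Lnorm1_def gnorm_def)

lemma lnorm1_gnorm: "lnorm1 q a = gnorm (count_space UNIV) q a"
proof -
  have "(SUP k. a k) = Inf {c. \<forall>k. a k \<le> c}"
    by (intro antisym Inf_greatest SUP_least) (auto intro: Inf_lower SUP_upper)
  then show ?thesis by (simp add: lnorm1_def gnorm_def AE_count_space)
qed

lemma q_pos: assumes "1 \<le> q" "q \<noteq> \<infinity>" shows "1 \<le> enn2real q" "0 < enn2real q"
proof -
  have "enn2real 1 \<le> enn2real q" using assms by (intro enn2real_mono) (auto simp: less_top)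
  then show "1 \<le> enn2real q" by simp
  then show "0 < enn2real q" by simp
qed

lemma gnorm_mono:
  assumes "1 \<le> q" "\<And>t. t \<in> space M \<Longrightarrow> h t \<le> g t"
  shows "gnorm M q h \<le> gnorm M q g"
proof (cases "q = \<infinity>")
  case True
  have "{c. AE t in M. g t \<le> c} \<subseteq> {c. AE t in M. h t \<le> c}"
  proof
    fix c assume "c \<in> {c. AE t in M. g t \<le> c}"
    then have "AE t in M. g t \<le> c" by simp
    with AE_space have "AE t in M. h t \<le> c"
      by eventually_elim (use assms(2) in \<open>auto intro: order_trans\<close>)
    then show "c \<in> {c. AE t in M. h t \<le> c}" by simp
  qed
  then show ?thesis using True by (simp add: gnorm_def Inf_superset_mono)
next
  case False
  note qq = q_pos[OF assms(1) False]
  have "(\<integral>\<^sup>+ t. epow (h t) (enn2real q) \<partial>M) \<le> (\<integral>\<^sup>+ t. epow (g t) (enn2real q) \<partial>M)"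
    using qq by (intro nn_integral_mono epow_mono assms(2)) auto
  then show ?thesis using False qq by (simp add: gnorm_def epow_mono)
qed

lemma gnorm_zero: assumes "1 \<le> q" shows "gnorm M q (\<lambda>_. 0) = 0"
proof (cases "q = \<infinity>")
  case True
  have "Inf {c::ennreal. AE t in M. (0::ennreal) \<le> c} \<le> 0" by (rule Inf_lower) simp
  then show ?thesis using True by (simp add: gnorm_def)
next
  case False
  note qq = q_pos[OF assms(1) False]
  then show ?thesis using False by (simp add: gnorm_def)
qed

lemma gnorm_AE:
  fixes h :: "'a \<Rightarrow> ennreal"
  shows "AE t in M. h t \<le> Inf {c. AE t in M. h t \<le> c}"
proof -
  define I where "I = Inf {c. AE t in M. h t \<le> c}"
  show ?thesis
  proof (cases "I = top")
    case True then show ?thesis by (simp add: I_def[symmetric])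
  next
    case False
    have "AE t in M. h t \<le> I + ennreal (1 / Suc n)" for n :: nat
    proof -
      have "I < I + ennreal (1 / Suc n)" using False
        by (cases I) (auto simp: ennreal_plus[symmetric] ennreal_less_iff add_pos_pos simp del: ennreal_plus)
      then obtain c where "AE t in M. h t \<le> c" "c < I + ennreal (1 / Suc n)"
        unfolding I_def by (auto simp: Inf_less_iff)
      then show ?thesis by (auto elim!: eventually_mono)
    qed
    then have "AE t in M. \<forall>n::nat. h t \<le> I + ennreal (1 / Suc n)"
      by (simp add: AE_all_countable)
    then have "AE t in M. h t \<le> I"
    proof (rule eventually_mono)
      fix t assume H: "\<forall>n::nat. h t \<le> I + ennreal (1 / Suc n)"
      show "h t \<le> I"
      proof (rule ennreal_le_epsilon)
        fix e :: real assume "0 < e"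
        then obtain n where n: "inverse (real (Suc n)) < e" using reals_Archimedean by blast
        have "h t \<le> I + ennreal (1 / Suc n)" using H by blast
        also have "\<dots> \<le> I + ennreal e" using n by (intro add_left_mono ennreal_leI) (simp add: field_simps)
        finally show "h t \<le> I + ennreal e" .
      qed
    qed
    then show ?thesis by (simp add: I_def)
  qed
qed

lemma gnorm_cmult_le:
  assumes "1 \<le> q" "0 < c" "h \<in> borel_measurable M"
  shows "gnorm M q (\<lambda>t. ennreal c * h t) \<le> ennreal c * gnorm M q h"
proof (cases "q = \<infinity>")
  case True
  have "AE t in M. ennreal c * h t \<le> ennreal c * Inf {c. AE t in M. h t \<le> c}"
    using gnorm_AE[of h M] by (auto elim!: eventually_mono intro: mult_left_mono)
  then show ?thesis using True by (simp add: gnorm_def Inf_lower)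
next
  case False
  note qq = q_pos[OF assms(1) False]
  have "(\<integral>\<^sup>+ t. epow (ennreal c * h t) (enn2real q) \<partial>M)
     = (\<integral>\<^sup>+ t. ennreal (c powr enn2real q) * epow (h t) (enn2real q) \<partial>M)"
    using qq assms by (simp add: epow_cmult)
  also have "\<dots> = ennreal (c powr enn2real q) * (\<integral>\<^sup>+ t. epow (h t) (enn2real q) \<partial>M)"
    using assms by (intro nn_integral_cmult) measurable
  finally have "gnorm M q (\<lambda>t. ennreal c * h t) = ennreal ((c powr enn2real q) powr (1 / enn2real q))
       * epow (\<integral>\<^sup>+ t. epow (h t) (enn2real q) \<partial>M) (1 / enn2real q)"
    using False qq assms by (simp add: gnorm_def epow_cmult)
  also have "(c powr enn2real q) powr (1 / enn2real q) = c" using qq assms by (simp add: powr_powr)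
  finally show ?thesis using False by (simp add: gnorm_def)
qed

lemma gnorm_cmult:
  assumes "1 \<le> q" "0 < c" "h \<in> borel_measurable M"
  shows "gnorm M q (\<lambda>t. ennreal c * h t) = ennreal c * gnorm M q h"
proof (rule antisym)
  show "gnorm M q (\<lambda>t. ennreal c * h t) \<le> ennreal c * gnorm M q h"
    by (rule gnorm_cmult_le[OF assms])
  have m: "(\<lambda>t. ennreal c * h t) \<in> borel_measurable M" using assms(3) by measurable
  have "gnorm M q h = gnorm M q (\<lambda>t. ennreal (1/c) * (ennreal c * h t))"
    using assms(2) by (simp add: mult.assoc[symmetric] ennreal_mult[symmetric] del: ennreal_mult')
  also have "\<dots> \<le> ennreal (1/c) * gnorm M q (\<lambda>t. ennreal c * h t)"
    using assms by (intro gnorm_cmult_le m) auto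
  finally have "ennreal c * gnorm M q h \<le> ennreal c * (ennreal (1/c) * gnorm M q (\<lambda>t. ennreal c * h t))"
    by (intro mult_left_mono) auto
  also have "\<dots> = gnorm M q (\<lambda>t. ennreal c * h t)"
    using assms(2) by (simp add: mult.assoc[symmetric] ennreal_mult[symmetric] del: ennreal_mult')
  finally show "ennreal c * gnorm M q h \<le> gnorm M q (\<lambda>t. ennreal c * h t)" .
qed

lemma gnorm_add:
  assumes "1 \<le> q" "h \<in> borel_measurable M" "g \<in> borel_measurable M"
  shows "gnorm M q (\<lambda>t. h t + g t) \<le> 4 * (gnorm M q h + gnorm M q g)"
proof (cases "q = \<infinity>")
  case True
  have "AE t in M. h t + g t \<le> Inf {c. AE t in M. h t \<le> c} + Inf {c. AE t in M. g t \<le> c}"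
    using gnorm_AE[of h M] gnorm_AE[of g M] by eventually_elim (rule add_mono)
  then have "gnorm M q (\<lambda>t. h t + g t) \<le> gnorm M q h + gnorm M q g"
    using True by (simp add: gnorm_def Inf_lower)
  also have "\<dots> \<le> 4 * (gnorm M q h + gnorm M q g)"
    by (metis mult_1 mult_right_mono one_le_numeral zero_le)
  finally show ?thesis .
next
  case False
  note qq = q_pos[OF assms(1) False]
  define Q where "Q = enn2real q"
  have Q: "1 \<le> Q" "0 < Q" using qq by (auto simp: Q_def)
  define A where "A = (\<integral>\<^sup>+ t. epow (h t) Q \<partial>M)"
  define B where "B = (\<integral>\<^sup>+ t. epow (g t) Q \<partial>M)"
  have "(\<integral>\<^sup>+ t. epow (h t + g t) Q \<partial>M) \<le> (\<integral>\<^sup>+ t. ennreal (2 powr Q) * (epow (h t) Q + epow (g t) Q) \<partial>M)"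
    using Q by (intro nn_integral_mono epow_add) auto
  also have "\<dots> = ennreal (2 powr Q) * (A + B)"
    unfolding A_def B_def using assms
    by (subst nn_integral_cmult, measurable, subst nn_integral_add, measurable)
  finally have 1: "gnorm M q (\<lambda>t. h t + g t) \<le> epow (ennreal (2 powr Q) * (A + B)) (1/Q)"
    using False Q by (simp add: gnorm_def Q_def epow_mono)
  also have "\<dots> = ennreal 2 * epow (A + B) (1/Q)"
    using Q by (simp add: epow_cmult powr_powr)
  also have "\<dots> \<le> ennreal 2 * (ennreal (2 powr (1/Q)) * (epow A (1/Q) + epow B (1/Q)))"
    using Q by (intro mult_left_mono epow_add) auto
  also have "\<dots> \<le> ennreal 2 * (ennreal 2 * (epow A (1/Q) + epow B (1/Q)))"
  proof -
    have "2 powr (1/Q) \<le> 2 powr 1" using Q by (intro powr_mono) auto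
    then have "ennreal (2 powr (1/Q)) \<le> ennreal 2" using Q by (intro ennreal_leI) simp
    then show ?thesis by (intro mult_left_mono mult_right_mono) auto
  qed
  also have "\<dots> = 4 * (gnorm M q h + gnorm M q g)"
    using False by (simp add: gnorm_def A_def B_def Q_def mult.assoc[symmetric])
  finally show ?thesis .
qed

lemma gnorm_sum:
  assumes "1 \<le> q" "finite E" "\<And>e. e \<in> E \<Longrightarrow> h e \<in> borel_measurable M"
  shows "gnorm M q (\<lambda>t. \<Sum>e\<in>E. h e t) \<le> 4 ^ card E * (\<Sum>e\<in>E. gnorm M q (h e))"
  using assms(2,3)
proof (induction E rule: finite_induct)
  case empty
  then show ?case using gnorm_zero[OF assms(1)] by simp
next
  case (insert a E)
  have m: "(\<lambda>t. \<Sum>e\<in>E. h e t) \<in> borel_measurable M" using insert by measurable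
  have "gnorm M q (\<lambda>t. \<Sum>e\<in>insert a E. h e t) = gnorm M q (\<lambda>t. h a t + (\<Sum>e\<in>E. h e t))"
    using insert by simp
  also have "\<dots> \<le> 4 * (gnorm M q (h a) + gnorm M q (\<lambda>t. \<Sum>e\<in>E. h e t))"
    using insert m by (intro gnorm_add assms(1)) auto
  also have "\<dots> \<le> 4 * (gnorm M q (h a) + 4 ^ card E * (\<Sum>e\<in>E. gnorm M q (h e)))"
    using insert by (intro mult_left_mono add_mono) auto
  also have "\<dots> \<le> 4 * (4 ^ card E * gnorm M q (h a) + 4 ^ card E * (\<Sum>e\<in>E. gnorm M q (h e)))"
  proof -
    have "1 \<le> (4::ennreal) ^ card E" by (simp add: one_le_power)
    from mult_right_mono[OF this, of "gnorm M q (h a)"]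
    have "gnorm M q (h a) \<le> 4 ^ card E * gnorm M q (h a)" by simp
    then show ?thesis by (intro mult_left_mono add_mono) auto
  qed
  also have "\<dots> = 4 ^ card (insert a E) * (\<Sum>e\<in>insert a E. gnorm M q (h e))"
    using insert by (simp add: distrib_left mult.assoc)
  finally show ?case .
qed

lemma mnorm_mono:
  assumes "\<And>x. F x \<le> G x" "\<forall>i<m. 1 \<le> p i"
  shows "mnorm m p F x \<le> mnorm m p G x"
  using assms(2)
proof (induction m arbitrary: x)
  case 0 then show ?case using assms(1) by simp
next
  case (Suc m)
  then show ?case by (simp add: Lnorm1_gnorm gnorm_mono)
qed

lemma lmix_mono:
  assumes "\<And>k. A k \<le> B k" "\<forall>i<m. 1 \<le> s i"
  shows "lmix m s A k \<le> lmix m s B k"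
  using assms(2)
proof (induction m arbitrary: k)
  case 0 then show ?case using assms(1) by simp
next
  case (Suc m)
  then show ?case by (simp add: lnorm1_gnorm gnorm_mono)
qed

lemma mnorm_coords:
  assumes "\<forall>i\<ge>m. x i = x' i"
  shows "mnorm m p F x = mnorm m p F x'"
  using assms
proof (induction m arbitrary: x x')
  case 0 then show ?case by (simp add: fun_eq_iff)
next
  case (Suc m)
  have "mnorm m p F (x(m := t)) = mnorm m p F (x'(m := t))" for t
    using Suc.prems by (intro Suc.IH) auto
  then show ?case by simp
qed

lemma lmix_coords:
  assumes "\<forall>i\<ge>m. k i = k' i"
  shows "lmix m s A k = lmix m s A k'"
  using assms
proof (induction m arbitrary: k k')
  case 0 then show ?case by (simp add: fun_eq_iff)
next
  case (Suc m)
  have "lmix m s A (k(m := t)) = lmix m s A (k'(m := t))" for t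
    using Suc.prems by (intro Suc.IH) auto
  then show ?case by simp
qed

lemma esssup_param_measurable:
  fixes H :: "'a \<Rightarrow> real \<Rightarrow> ennreal"
  assumes H[measurable]: "(\<lambda>(x,t). H x t) \<in> borel_measurable (N \<Otimes>\<^sub>M lborel)"
  shows "(\<lambda>x. Inf {c. AE t in lborel. H x t \<le> c}) \<in> borel_measurable N"
proof (rule borel_measurableI_le)
  fix d
  have Hx: "(\<lambda>t. H x t) \<in> borel_measurable lborel" if "x \<in> space N" for x
    using measurable_compose_Pair1[OF that H] by simp
  have eq: "Inf {c. AE t in lborel. H x t \<le> c} \<le> d \<longleftrightarrow> (\<integral>\<^sup>+ t. indicator {t. d < H x t} t \<partial>lborel) = 0"
    if x: "x \<in> space N" for x
  proof -
    have ms: "{t. d < H x t} \<in> sets lborel" using Hx[OF x] by measurable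
    have "Inf {c. AE t in lborel. H x t \<le> c} \<le> d \<longleftrightarrow> (AE t in lborel. H x t \<le> d)"
    proof
      assume "Inf {c. AE t in lborel. H x t \<le> c} \<le> d"
      with gnorm_AE[of "H x" lborel] show "AE t in lborel. H x t \<le> d"
        by (auto elim!: eventually_mono)
    qed (auto intro: Inf_lower)
    also have "\<dots> \<longleftrightarrow> emeasure lborel {t. d < H x t} = 0"
      by (rule AE_iff_measurable[OF ms]) (auto simp: not_le)
    also have "\<dots> \<longleftrightarrow> (\<integral>\<^sup>+ t. indicator {t. d < H x t} t \<partial>lborel) = 0"
      using ms by simp
    finally show ?thesis .
  qed
  have "{x \<in> space N. Inf {c. AE t in lborel. H x t \<le> c} \<le> d}
      = {x \<in> space N. (\<integral>\<^sup>+ t. indicator {t. d < H x t} t \<partial>lborel) = 0}"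
    using eq by auto
  also have "\<dots> \<in> sets N" by measurable
  finally show "{x \<in> space N. Inf {c. AE t in lborel. H x t \<le> c} \<le> d} \<in> sets N" .
qed

lemma upd_measurable[measurable]:
  assumes "m < n"
  shows "(\<lambda>(x, t). x(m := t)) \<in> measurable (Rn n \<Otimes>\<^sub>M lborel) (Rn n)"
proof -
  have "insert m {..<n} = {..<n}" using assms by auto
  then show ?thesis using measurable_add_dim[of m "{..<n}" "\<lambda>_. lborel"] by simp
qed

lemma mnorm_measurable:
  assumes F: "F \<in> borel_measurable (Rn n)" "m \<le> n" "\<forall>i<n. 1 \<le> p i"
  shows "(\<lambda>x. mnorm m p F x) \<in> borel_measurable (Rn n)"
  using assms(2)
proof (induction m)
  case 0 then show ?case using F by simp
next
  case (Suc m)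
  then have G[measurable]: "(\<lambda>x. mnorm m p F x) \<in> borel_measurable (Rn n)" and mn: "m < n" by auto
  have H[measurable]: "(\<lambda>(x, t). mnorm m p F (x(m := t))) \<in> borel_measurable (Rn n \<Otimes>\<^sub>M lborel)"
    using measurable_comp[OF upd_measurable[OF mn] G] by (simp add: comp_def case_prod_beta')
  show ?case
  proof (cases "p m = \<infinity>")
    case True
    have "(\<lambda>x. Inf {c. AE t in lborel. mnorm m p F (x(m := t)) \<le> c}) \<in> borel_measurable (Rn n)"
      using esssup_param_measurable[of "\<lambda>x t. mnorm m p F (x(m := t))"] H by simp
    then show ?thesis using True by (simp add: Lnorm1_def)
  next
    case False
    then show ?thesis by (simp add: Lnorm1_def) measurable
  qed
qed

lemma upd_space: "x \<in> space (Rn n) \<Longrightarrow> m < n \<Longrightarrow> x(m := t) \<in> space (Rn n)"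
  by (auto simp: space_PiM PiE_iff extensional_def)

lemma upd_meas_t: "x \<in> space (Rn n) \<Longrightarrow> m < n \<Longrightarrow> (\<lambda>t. x(m := t)) \<in> measurable lborel (Rn n)"
  using measurable_compose_Pair1[OF _ upd_measurable] by fastforce

lemma count_meas[simp]: "f \<in> borel_measurable (count_space UNIV)"
  by simp

lemma mnorm_sum:
  assumes "finite E" "\<And>e. e \<in> E \<Longrightarrow> g e \<in> borel_measurable (Rn n)" "m \<le> n" "\<forall>i<n. 1 \<le> p i"
    "x \<in> space (Rn n)"
  shows "mnorm m p (\<lambda>x. \<Sum>e\<in>E. g e x) x \<le> (4 ^ card E) ^ m * (\<Sum>e\<in>E. mnorm m p (g e) x)"
  using assms(3,5)
proof (induction m arbitrary: x)
  case 0 then show ?case by simp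
next
  case (Suc m)
  have mn: "m < n" "m \<le> n" using Suc by auto
  have pm: "1 \<le> p m" using assms(4) mn by auto
  have meas: "(\<lambda>t. mnorm m p (g e) (x(m := t))) \<in> borel_measurable lborel" if "e \<in> E" for e
    using measurable_comp[OF upd_meas_t[OF Suc.prems(2) mn(1)] mnorm_measurable[OF assms(2)[OF that] mn(2) assms(4)]]
    by (simp add: comp_def)
  define K :: ennreal where "K = 4 ^ card E"
  have K: "K ^ m = ennreal (4 ^ (card E * m))" unfolding K_def
    by (metis ennreal_numeral ennreal_power zero_le_numeral power_mult)
  have "mnorm (Suc m) p (\<lambda>x. \<Sum>e\<in>E. g e x) x
      = gnorm lborel (p m) (\<lambda>t. mnorm m p (\<lambda>x. \<Sum>e\<in>E. g e x) (x(m := t)))"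
    by (simp add: Lnorm1_gnorm)
  also have "\<dots> \<le> gnorm lborel (p m) (\<lambda>t. K ^ m * (\<Sum>e\<in>E. mnorm m p (g e) (x(m := t))))"
    unfolding K_def using Suc upd_space[OF Suc.prems(2) mn(1)] pm by (intro gnorm_mono) auto
  also have "\<dots> = K ^ m * gnorm lborel (p m) (\<lambda>t. \<Sum>e\<in>E. mnorm m p (g e) (x(m := t)))"
    unfolding K using pm meas assms(1) by (intro gnorm_cmult) auto
  also have "\<dots> \<le> K ^ m * (K * (\<Sum>e\<in>E. gnorm lborel (p m) (\<lambda>t. mnorm m p (g e) (x(m := t)))))"
    unfolding K_def using pm meas assms(1) by (intro mult_left_mono gnorm_sum) auto
  also have "\<dots> = K ^ Suc m * (\<Sum>e\<in>E. mnorm (Suc m) p (g e) x)"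
    by (simp add: Lnorm1_gnorm mult.left_commute mult.assoc)
  finally show ?case unfolding K_def .
qed

lemma lmix_sum:
  assumes "finite E" "\<forall>i<m. 1 \<le> s i"
  shows "lmix m s (\<lambda>k. \<Sum>e\<in>E. A e k) k \<le> (4 ^ card E) ^ m * (\<Sum>e\<in>E. lmix m s (A e) k)"
  using assms(2)
proof (induction m arbitrary: k)
  case 0 then show ?case by simp
next
  case (Suc m)
  have sm: "1 \<le> s m" using Suc by auto
  define K :: ennreal where "K = 4 ^ card E"
  have K: "K ^ m = ennreal (4 ^ (card E * m))" unfolding K_def
    by (metis ennreal_numeral ennreal_power zero_le_numeral power_mult)
  have "lmix (Suc m) s (\<lambda>k. \<Sum>e\<in>E. A e k) k
      = gnorm (count_space UNIV) (s m) (\<lambda>j. lmix m s (\<lambda>k. \<Sum>e\<in>E. A e k) (k(m := j)))"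
    by (simp add: lnorm1_gnorm)
  also have "\<dots> \<le> gnorm (count_space UNIV) (s m) (\<lambda>j. K ^ m * (\<Sum>e\<in>E. lmix m s (A e) (k(m := j))))"
    unfolding K_def using Suc sm by (intro gnorm_mono) auto
  also have "\<dots> = K ^ m * gnorm (count_space UNIV) (s m) (\<lambda>j. \<Sum>e\<in>E. lmix m s (A e) (k(m := j)))"
    unfolding K using sm by (intro gnorm_cmult) auto
  also have "\<dots> \<le> K ^ m * (K * (\<Sum>e\<in>E. gnorm (count_space UNIV) (s m) (\<lambda>j. lmix m s (A e) (k(m := j)))))"
    unfolding K_def using sm assms(1) by (intro mult_left_mono gnorm_sum) auto
  also have "\<dots> = K ^ Suc m * (\<Sum>e\<in>E. lmix (Suc m) s (A e) k)"
    by (simp add: lnorm1_gnorm mult.left_commute mult.assoc)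
  finally show ?case unfolding K_def .
qed

lemma lmix_cmult:
  assumes "0 < c" "\<forall>i<m. 1 \<le> s i"
  shows "lmix m s (\<lambda>k. ennreal c * A k) k = ennreal c * lmix m s A k"
  using assms(2)
proof (induction m arbitrary: k)
  case 0 then show ?case by simp
next
  case (Suc m)
  then show ?case using assms(1) by (simp add: lnorm1_gnorm gnorm_cmult)
qed

lemma gnorm_dilate:
  fixes B :: "int \<Rightarrow> ennreal" and L c :: int
  assumes "1 \<le> q" "1 \<le> L"
  shows "gnorm (count_space UNIV) q (\<lambda>j. B (L * j + c)) \<le> gnorm (count_space UNIV) q B"
proof -
  define g where "g j = L * j + c" for j
  have inj: "inj g" using assms(2) by (auto simp: inj_def g_def)
  show ?thesis
  proof (cases "q = \<infinity>")
    case True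
    have "{d. \<forall>k. B k \<le> d} \<subseteq> {d. \<forall>j. B (L * j + c) \<le> d}" by auto
    then show ?thesis using True by (simp add: gnorm_def AE_count_space Inf_superset_mono)
  next
    case False
    define F where "F k = epow (B k) (enn2real q)" for k
    have "(\<integral>\<^sup>+ j. F (g j) \<partial>count_space UNIV) = (\<integral>\<^sup>+ k. F k \<partial>count_space (range g))"
      by (rule nn_integral_bij_count_space) (use inj in \<open>simp add: bij_betw_def\<close>)
    also have "\<dots> = (\<integral>\<^sup>+ k. F k * indicator (range g) k \<partial>count_space UNIV)"
      by (rule nn_integral_count_space_indicator) simp
    also have "\<dots> \<le> (\<integral>\<^sup>+ k. F k \<partial>count_space UNIV)"
      by (intro nn_integral_mono) (auto simp: indicator_def)
    finally show ?thesis using False q_pos[OF assms(1) False]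
      by (simp add: gnorm_def F_def g_def epow_mono)
  qed
qed

definition dil :: "nat \<Rightarrow> int \<Rightarrow> (nat \<Rightarrow> int) \<Rightarrow> (nat \<Rightarrow> int) \<Rightarrow> (nat \<Rightarrow> int)" where
  "dil n L e k = (\<lambda>i. if i < n then L * k i + e i else k i)"

lemma lmix_dilate:
  assumes "1 \<le> L" "m \<le> n" "\<forall>i<n. 1 \<le> s i"
  shows "lmix m s (\<lambda>k. A (dil n L e k)) k0 \<le> lmix m s A (dil n L e k0)"
  using assms(2)
proof (induction m arbitrary: k0)
  case 0 then show ?case by simp
next
  case (Suc m)
  have mn: "m < n" "m \<le> n" using Suc by auto
  have sm: "1 \<le> s m" "\<forall>i<m. 1 \<le> s i" using assms(3) mn by auto
  have d: "dil n L e (k0(m := j)) = (dil n L e k0)(m := L * j + e m)" for j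
    using mn by (auto simp: dil_def fun_eq_iff)
  have "lmix (Suc m) s (\<lambda>k. A (dil n L e k)) k0
      = gnorm (count_space UNIV) (s m) (\<lambda>j. lmix m s (\<lambda>k. A (dil n L e k)) (k0(m := j)))"
    by (simp add: lnorm1_gnorm)
  also have "\<dots> \<le> gnorm (count_space UNIV) (s m) (\<lambda>j. lmix m s A ((dil n L e k0)(m := L * j + e m)))"
    using sm(1)
  proof (intro gnorm_mono)
    fix t
    show "lmix m s (\<lambda>k. A (dil n L e k)) (k0(m := t)) \<le> lmix m s A ((dil n L e k0)(m := L * t + e m))"
      using Suc.IH[OF mn(2), of "k0(m := t)"] by (simp only: d)
  qed
  also have "\<dots> \<le> gnorm (count_space UNIV) (s m) (\<lambda>j. lmix m s A ((dil n L e k0)(m := j)))"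
    using gnorm_dilate[OF sm(1) assms(1), of "\<lambda>j. lmix m s A ((dil n L e k0)(m := j))" "e m"] by simp
  also have "\<dots> = lmix (Suc m) s A (dil n L e k0)"
    by (simp add: lnorm1_gnorm)
  finally show ?case .
qed

lemma lmixed_dilate:
  assumes "1 \<le> L" "\<forall>i<n. 1 \<le> s i"
  shows "lmixed n s (\<lambda>k. A (dil n L e k)) \<le> lmixed n s A"
proof -
  have "lmixed n s (\<lambda>k. A (dil n L e k)) \<le> lmix n s A (dil n L e (\<lambda>_. undefined))"
    unfolding lmixed_def using assms by (intro lmix_dilate) auto
  also have "\<dots> = lmixed n s A"
    unfolding lmixed_def by (rule lmix_coords) (auto simp: dil_def)
  finally show ?thesis .
qed

lemma floor_div_eq:
  fixes \<rho> t :: real assumes "0 < \<rho>"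
  shows "\<lfloor>t / \<rho>\<rfloor> = k \<longleftrightarrow> \<rho> * of_int k \<le> t \<and> t < \<rho> * (of_int k + 1)"
  using assms by (simp add: floor_eq_iff pos_le_divide_eq pos_divide_less_eq mult.commute)

lemma floor_div_meas:
  fixes \<rho> :: real assumes "0 < \<rho>"
  shows "(\<lambda>t. \<lfloor>t / \<rho>\<rfloor>) \<in> measurable lborel (count_space UNIV)"
proof -
  have "(\<lambda>t. \<lfloor>t / \<rho>\<rfloor>) -` {a} = {\<rho> * of_int a ..< \<rho> * (of_int a + 1)}" for a
    by (simp add: set_eq_iff vimage_def floor_div_eq[OF assms])
  then show ?thesis by (subst measurable_count_space_eq2_countable) auto
qed

lemma distr_floor:
  fixes \<rho> :: real assumes "0 < \<rho>"
  shows "distr lborel (count_space UNIV) (\<lambda>t. \<lfloor>t / \<rho>\<rfloor>) = scale_measure (ennreal \<rho>) (count_space UNIV)"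
proof (rule measure_eqI_countable[where A = UNIV])
  fix a :: int
  have pre: "(\<lambda>t. \<lfloor>t / \<rho>\<rfloor>) -` {a} = {\<rho> * of_int a ..< \<rho> * (of_int a + 1)}"
    by (simp add: set_eq_iff vimage_def floor_div_eq[OF assms])
  have "emeasure (distr lborel (count_space UNIV) (\<lambda>t. \<lfloor>t / \<rho>\<rfloor>)) {a}
      = emeasure lborel {\<rho> * of_int a ..< \<rho> * (of_int a + 1)}"
    by (subst emeasure_distr[OF floor_div_meas[OF assms]]) (auto simp: pre)
  also have "\<dots> = ennreal \<rho>" using assms by (simp add: algebra_simps)
  finally show "emeasure (distr lborel (count_space UNIV) (\<lambda>t. \<lfloor>t / \<rho>\<rfloor>)) {a}
      = emeasure (scale_measure (ennreal \<rho>) (count_space UNIV)) {a}" by simp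
qed auto

lemma nn_integral_floor:
  fixes \<rho> :: real and F :: "int \<Rightarrow> ennreal" assumes "0 < \<rho>"
  shows "(\<integral>\<^sup>+ t. F \<lfloor>t / \<rho>\<rfloor> \<partial>lborel) = ennreal \<rho> * (\<integral>\<^sup>+ k. F k \<partial>count_space UNIV)"
proof -
  have "(\<integral>\<^sup>+ t. F \<lfloor>t / \<rho>\<rfloor> \<partial>lborel) = (\<integral>\<^sup>+ k. F k \<partial>distr lborel (count_space UNIV) (\<lambda>t. \<lfloor>t / \<rho>\<rfloor>))"
    by (rule nn_integral_distr[symmetric]) (auto intro: floor_div_meas[OF assms])
  also have "\<dots> = ennreal \<rho> * (\<integral>\<^sup>+ k. F k \<partial>count_space UNIV)"
    unfolding distr_floor[OF assms] by (rule nn_integral_scale_measure) simp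
  finally show ?thesis .
qed

lemma gnorm_floor:
  fixes \<rho> :: real and B :: "int \<Rightarrow> ennreal" assumes "0 < \<rho>" "1 \<le> q"
  shows "gnorm lborel q (\<lambda>t. B \<lfloor>t / \<rho>\<rfloor>) = ennreal (\<rho> powr enn2real (inverse q)) * gnorm (count_space UNIV) q B"
proof (cases "q = \<infinity>")
  case True
  have "{c. AE t in lborel. B \<lfloor>t / \<rho>\<rfloor> \<le> c} = {c. \<forall>k. B k \<le> c}"
  proof (intro Collect_cong iffI)
    fix c assume "\<forall>k. B k \<le> c" then show "AE t in lborel. B \<lfloor>t / \<rho>\<rfloor> \<le> c" by simp
  next
    fix c assume ae: "AE t in lborel. B \<lfloor>t / \<rho>\<rfloor> \<le> c"
    show "\<forall>k. B k \<le> c"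
    proof (rule ccontr)
      assume "\<not> (\<forall>k. B k \<le> c)"
      then obtain k where k: "\<not> B k \<le> c" by auto
      from ae obtain N where N: "{t \<in> space lborel. \<not> B \<lfloor>t / \<rho>\<rfloor> \<le> c} \<subseteq> N" "emeasure lborel N = 0" "N \<in> sets lborel"
        by (auto elim!: AE_E)
      have "{\<rho> * of_int k ..< \<rho> * (of_int k + 1)} \<subseteq> N"
      proof
        fix x assume "x \<in> {\<rho> * of_int k ..< \<rho> * (of_int k + 1)}"
        then have "\<lfloor>x / \<rho>\<rfloor> = k" using floor_div_eq[OF assms(1)] by auto
        then show "x \<in> N" using N(1) k by auto
      qed
      then have "emeasure lborel {\<rho> * of_int k ..< \<rho> * (of_int k + 1)} \<le> emeasure lborel N"
        using N(3) by (intro emeasure_mono) auto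
      then show False using N(2) assms(1) by (simp add: algebra_simps)
    qed
  qed
  then show ?thesis using True assms(1) by (simp add: gnorm_def AE_count_space)
next
  case False
  note qq = q_pos[OF assms(2) False]
  have inv: "enn2real (inverse q) = 1 / enn2real q"
    using False qq by (cases q) (auto simp: inverse_ennreal divide_inverse)
  have "(\<integral>\<^sup>+ t. epow (B \<lfloor>t / \<rho>\<rfloor>) (enn2real q) \<partial>lborel)
     = ennreal \<rho> * (\<integral>\<^sup>+ k. epow (B k) (enn2real q) \<partial>count_space UNIV)"
    by (rule nn_integral_floor[OF assms(1)])
  then show ?thesis using False qq assms(1) by (simp add: gnorm_def epow_cmult inv)
qed

definition kmap :: "real \<Rightarrow> nat \<Rightarrow> (nat \<Rightarrow> real) \<Rightarrow> (nat \<Rightarrow> int)" where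
  "kmap \<rho> n y = (\<lambda>i. if i < n then \<lfloor>y i / \<rho>\<rfloor> else undefined)"

lemma mnorm_step:
  assumes "0 < \<rho>" "\<forall>i<n. 1 \<le> s i" "m \<le> n"
  shows "mnorm m s (\<lambda>y. A (kmap \<rho> n y)) y0
       = ennreal (\<rho> powr (\<Sum>i<m. enn2real (inverse (s i)))) * lmix m s A (kmap \<rho> n y0)"
  using assms(3)
proof (induction m arbitrary: y0)
  case 0 then show ?case using assms(1) by simp
next
  case (Suc m)
  have mn: "m < n" "m \<le> n" using Suc by auto
  have sm: "1 \<le> s m" using assms(2) mn by auto
  define c where "c = \<rho> powr (\<Sum>i<m. enn2real (inverse (s i)))"
  have c: "0 < c" using assms(1) by (simp add: c_def)
  define Bf where "Bf j = lmix m s A ((kmap \<rho> n y0)(m := j))" for j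
  have k: "kmap \<rho> n (y0(m := t)) = (kmap \<rho> n y0)(m := \<lfloor>t / \<rho>\<rfloor>)" for t
    using mn by (auto simp: kmap_def fun_eq_iff)
  have meas: "(\<lambda>t. Bf \<lfloor>t / \<rho>\<rfloor>) \<in> borel_measurable lborel"
    using measurable_comp[OF floor_div_meas[OF assms(1)] count_meas[of Bf]] by (simp add: comp_def)
  have "mnorm (Suc m) s (\<lambda>y. A (kmap \<rho> n y)) y0
      = gnorm lborel (s m) (\<lambda>t. mnorm m s (\<lambda>y. A (kmap \<rho> n y)) (y0(m := t)))"
    by (simp add: Lnorm1_gnorm)
  also have "\<dots> = gnorm lborel (s m) (\<lambda>t. ennreal c * Bf \<lfloor>t / \<rho>\<rfloor>)"
    by (simp only: Suc.IH[OF mn(2)] k Bf_def c_def)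
  also have "\<dots> = ennreal c * gnorm lborel (s m) (\<lambda>t. Bf \<lfloor>t / \<rho>\<rfloor>)"
    by (rule gnorm_cmult[OF sm c meas])
  also have "\<dots> = ennreal c * (ennreal (\<rho> powr enn2real (inverse (s m))) * gnorm (count_space UNIV) (s m) Bf)"
    by (simp add: gnorm_floor[OF assms(1) sm])
  also have "\<dots> = ennreal (\<rho> powr (\<Sum>i<Suc m. enn2real (inverse (s i)))) * lmix (Suc m) s A (kmap \<rho> n y0)"
    using assms(1) by (simp add: c_def Bf_def[abs_def] lnorm1_gnorm powr_add ennreal_mult mult.assoc)
  finally show ?case .
qed

lemma Lmixed_step:
  assumes "0 < \<rho>" "\<forall>i<n. 1 \<le> s i"
  shows "Lmixed n s (\<lambda>y. A (kmap \<rho> n y))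
       = ennreal (\<rho> powr (\<Sum>i<n. enn2real (inverse (s i)))) * lmixed n s A"
proof -
  have "Lmixed n s (\<lambda>y. A (kmap \<rho> n y))
       = ennreal (\<rho> powr (\<Sum>i<n. enn2real (inverse (s i)))) * lmix n s A (kmap \<rho> n (\<lambda>_. undefined))"
    unfolding Lmixed_def using assms by (intro mnorm_step) auto
  also have "lmix n s A (kmap \<rho> n (\<lambda>_. undefined)) = lmixed n s A"
    unfolding lmixed_def by (rule lmix_coords) (auto simp: kmap_def)
  finally show ?thesis .
qed

lemma cube_floor:
  assumes "0 < \<rho>"
  shows "x \<in> cubeN n \<rho> k \<longleftrightarrow> x \<in> space (Rn n) \<and> (\<forall>i<n. \<lfloor>x i / \<rho>\<rfloor> = k i)"
  using assms by (auto simp: cubeN_def floor_div_eq)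

lemma cube_sets[measurable]: "cubeN n \<rho> k \<in> sets (Rn n)"
  unfolding cubeN_def by measurable

lemma ball_coord:
  assumes "x \<in> ballN n y r" "i < n"
  shows "\<bar>x i - y i\<bar> < r"
proof -
  define S where "S = (\<Sum>i<n. (x i - y i)^2)"
  have S0: "0 \<le> S" unfolding S_def by (intro sum_nonneg) auto
  have sq: "sqrt S < r" using assms(1) by (simp add: ballN_def S_def)
  then have r0: "0 \<le> r" using real_sqrt_ge_zero[OF S0] by linarith
  have "sqrt S < sqrt (r^2)" using sq r0 by simp
  then have "S < r^2" by (simp only: real_sqrt_less_iff)
  moreover have "(x i - y i)^2 \<le> S" unfolding S_def using assms(2)
    by (intro member_le_sum) auto
  ultimately have "\<bar>x i - y i\<bar>^2 < r^2" by simp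
  then show ?thesis using r0 by (rule power2_less_imp_less)
qed

lemma floor_close:
  fixes a b :: real assumes "\<bar>a - b\<bar> < 1"
  shows "\<lfloor>a\<rfloor> - \<lfloor>b\<rfloor> \<in> {-1, 0, 1}"
proof -
  have "real_of_int \<lfloor>a\<rfloor> < real_of_int \<lfloor>b\<rfloor> + 2" "real_of_int \<lfloor>b\<rfloor> < real_of_int \<lfloor>a\<rfloor> + 2"
    using assms floor_correct[of a] floor_correct[of b] by linarith+
  then have "\<lfloor>a\<rfloor> < \<lfloor>b\<rfloor> + 2" "\<lfloor>b\<rfloor> < \<lfloor>a\<rfloor> + 2" by linarith+
  then show ?thesis by auto
qed

lemma ball_in_cubes:
  assumes "x \<in> ballN n y r" "0 < r"
  shows "\<exists>e\<in>PiE {..<n} (\<lambda>_. {-1,0,1::int}). x \<in> cubeN n r (dil n 1 e (kmap r n y))"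
proof -
  define e where "e = (\<lambda>i. if i < n then \<lfloor>x i / r\<rfloor> - \<lfloor>y i / r\<rfloor> else undefined)"
  have "e i \<in> {-1,0,1}" if "i < n" for i
  proof -
    have "\<bar>x i / r - y i / r\<bar> = \<bar>x i - y i\<bar> / r" using assms(2) by (simp add: diff_divide_distrib[symmetric])
    also have "\<dots> < 1" using ball_coord[OF assms(1) that] assms(2) by simp
    finally show ?thesis using floor_close that by (simp add: e_def)
  qed
  then have "e \<in> PiE {..<n} (\<lambda>_. {-1,0,1::int})" by (auto simp: PiE_iff e_def extensional_def)
  moreover have "x \<in> space (Rn n)" using assms(1) by (simp add: ballN_def)
  then have "x \<in> cubeN n r (dil n 1 e (kmap r n y))"
    using assms(2) by (simp add: cube_floor dil_def kmap_def e_def)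
  ultimately show ?thesis by blast
qed

lemma cube_in_ball:
  assumes "x \<in> cubeN n (r / real n) (kmap (r / real n) n y)" "0 < r" "1 \<le> n"
  shows "x \<in> ballN n y r"
proof -
  define \<rho> where "\<rho> = r / real n"
  have \<rho>: "0 < \<rho>" using assms by (simp add: \<rho>_def)
  have xs: "x \<in> space (Rn n)" and fl: "\<forall>i<n. \<lfloor>x i / \<rho>\<rfloor> = \<lfloor>y i / \<rho>\<rfloor>"
    using assms(1) \<rho> by (auto simp: cube_floor \<rho>_def kmap_def)
  have d: "\<bar>x i - y i\<bar> < \<rho>" if "i < n" for i
  proof -
    have "\<lfloor>x i / \<rho>\<rfloor> = \<lfloor>y i / \<rho>\<rfloor>" using fl that by auto
    then have "\<bar>x i / \<rho> - y i / \<rho>\<bar> < 1" by linarith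
    then have "\<bar>x i - y i\<bar> / \<rho> < 1" using \<rho> by (simp add: diff_divide_distrib[symmetric])
    then show ?thesis using \<rho> by (simp add: divide_less_eq)
  qed
  have "(\<Sum>i<n. (x i - y i)^2) < (\<Sum>i<n. \<rho>^2)"
  proof (rule sum_strict_mono)
    have "0 \<in> {..<n}" using assms(3) by simp
    then show "{..<n} \<noteq> {}" by blast
    fix i assume "i \<in> {..<n}"
    then have "\<bar>x i - y i\<bar>^2 < \<rho>^2" using d \<rho> by (intro power_strict_mono) auto
    then show "(x i - y i)^2 < \<rho>^2" by simp
  qed auto
  also have "\<dots> = real n * \<rho>^2" by simp
  also have "\<dots> = r^2 / real n" using assms(3) by (simp add: \<rho>_def power2_eq_square)
  also have "\<dots> \<le> r^2"
  proof -
    have n1: "1 \<le> real n" using assms(3) by simp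
    have "r^2 * 1 \<le> r^2 * real n" by (rule mult_left_mono[OF n1]) simp
    then show ?thesis using n1 by (simp add: divide_le_eq)
  qed
  finally have "sqrt (\<Sum>i<n. (x i - y i)^2) < sqrt (r^2)" by (simp only: real_sqrt_less_iff)
  then have "sqrt (\<Sum>i<n. (x i - y i)^2) < r" using assms(2) by simp
  then show ?thesis using xs by (simp add: ballN_def)
qed

lemma cube_in_subcubes:
  assumes "x \<in> cubeN n r k" "0 < r" "1 \<le> n"
  shows "\<exists>e\<in>PiE {..<n} (\<lambda>_. {0..<int n}). x \<in> cubeN n (r / real n) (dil n (int n) e k)"
proof -
  define \<rho> where "\<rho> = r / real n"
  have \<rho>: "0 < \<rho>" using assms by (simp add: \<rho>_def)
  have xs: "x \<in> space (Rn n)" and fl: "\<forall>i<n. \<lfloor>x i / r\<rfloor> = k i"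
    using assms(1,2) by (auto simp: cube_floor)
  define e where "e = (\<lambda>i. if i < n then \<lfloor>x i / \<rho>\<rfloor> - int n * k i else undefined)"
  have "e i \<in> {0..<int n}" if "i < n" for i
  proof -
    have u: "of_int (k i) \<le> x i / r" "x i / r < of_int (k i) + 1"
      using fl that floor_correct[of "x i / r"] by auto
    have eq: "x i / \<rho> = real n * (x i / r)" using assms by (simp add: \<rho>_def)
    have "real n * of_int (k i) \<le> real n * (x i / r)" by (rule mult_left_mono[OF u(1)]) simp
    moreover have "real n * (x i / r) < real n * (of_int (k i) + 1)"
      by (rule mult_strict_left_mono[OF u(2)]) (use assms(3) in simp)
    ultimately have "real n * of_int (k i) \<le> x i / \<rho>" "x i / \<rho> < real n * of_int (k i) + real n"
      unfolding eq by (auto simp: distrib_left)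
    then have "int n * k i \<le> \<lfloor>x i / \<rho>\<rfloor>" "\<lfloor>x i / \<rho>\<rfloor> < int n * k i + int n"
      by (auto simp: le_floor_iff floor_less_iff)
    then show ?thesis using that by (simp add: e_def)
  qed
  then have "e \<in> PiE {..<n} (\<lambda>_. {0..<int n})" by (auto simp: PiE_iff e_def extensional_def)
  moreover have "x \<in> cubeN n \<rho> (dil n (int n) e k)"
    using \<rho> xs by (simp add: cube_floor dil_def e_def)
  ultimately show ?thesis by (auto simp: \<rho>_def)
qed

lemma undef_space: "(\<lambda>_. undefined) \<in> space (Rn n)"
  by (simp add: space_PiM PiE_iff extensional_def)

lemma four_pow: "((4::ennreal) ^ k) ^ m = ennreal (4 ^ (k * m))"
  by (metis ennreal_numeral ennreal_power zero_le_numeral power_mult)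

lemma ennreal_mult4: "0 \<le> a \<Longrightarrow> 0 \<le> b \<Longrightarrow> 0 \<le> c \<Longrightarrow>
  ennreal a * (ennreal b * (ennreal c * (of_nat k * X))) = ennreal (a * b * c * real k) * X"
  by (simp add: ennreal_mult ennreal_of_nat_eq_real_of_nat mult.assoc)

lemma ennreal_mult2: "0 \<le> a \<Longrightarrow> 0 \<le> b \<Longrightarrow> ennreal a * (ennreal b * X) = ennreal (a * b) * X"
  by (simp add: ennreal_mult mult.assoc)

lemma Lmixed_sum:
  assumes "finite E" "\<And>e. e \<in> E \<Longrightarrow> g e \<in> borel_measurable (Rn n)" "\<forall>i<n. 1 \<le> p i"
  shows "Lmixed n p (\<lambda>x. \<Sum>e\<in>E. g e x) \<le> ennreal (4 ^ (card E * n)) * (\<Sum>e\<in>E. Lmixed n p (g e))"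
  using mnorm_sum[OF assms(1,2) order_refl assms(3) undef_space] unfolding Lmixed_def four_pow .

lemma lmixed_sum:
  assumes "finite E" "\<forall>i<n. 1 \<le> s i"
  shows "lmixed n s (\<lambda>k. \<Sum>e\<in>E. A e k) \<le> ennreal (4 ^ (card E * n)) * (\<Sum>e\<in>E. lmixed n s (A e))"
  using lmix_sum[OF assms(1), of n s A] assms(2) unfolding lmixed_def four_pow by simp

lemma Lmixed_mono:
  assumes "\<And>x. F x \<le> G x" "\<forall>i<n. 1 \<le> p i"
  shows "Lmixed n p F \<le> Lmixed n p G"
  unfolding Lmixed_def using assms by (intro mnorm_mono) auto

lemma lmixed_mono:
  assumes "\<And>k. A k \<le> B k" "\<forall>i<n. 1 \<le> s i"
  shows "lmixed n s A \<le> lmixed n s B"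
  unfolding lmixed_def using assms by (intro lmix_mono) auto

lemma lmixed_cmult:
  assumes "0 < c" "\<forall>i<n. 1 \<le> s i"
  shows "lmixed n s (\<lambda>k. ennreal c * A k) = ennreal c * lmixed n s A"
  unfolding lmixed_def using assms by (intro lmix_cmult) auto

lemma ind_meas[measurable]:
  assumes "f \<in> borel_measurable (Rn n)"
  shows "(\<lambda>x. indicator (cubeN n \<rho> k) x * ennreal (cmod (f x))) \<in> borel_measurable (Rn n)"
  using assms by measurable

theorem lemma3p3:
  fixes n :: nat and p s :: "nat \<Rightarrow> ennreal" and \<alpha> :: ennreal
  assumes "n \<ge> 1"
    and "\<forall>i<n. 1 \<le> p i" and "\<forall>i<n. 1 \<le> s i" and "1 \<le> \<alpha>"
    and "(\<Sum>i<n. inverse (s i)) / of_nat n \<le> inverse \<alpha>"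
    and "inverse \<alpha> \<le> (\<Sum>i<n. inverse (p i)) / of_nat n"
  shows "\<exists>c C :: real. 0 < c \<and> c \<le> C \<and>
    (\<forall>f r. L1loc n f \<longrightarrow> r > 0 \<longrightarrow>
      (let \<sigma> = (\<Sum>i<n. enn2real (inverse (s i)));
           NB = Lmixed n s (\<lambda>y. Lmixed n p (\<lambda>x. indicator (ballN n y r) x * ennreal (cmod (f x))));
           NQ = lmixed n s (\<lambda>k. Lmixed n p (\<lambda>x. indicator (cubeN n r k) x * ennreal (cmod (f x))))
       in ennreal c * ennreal (r powr (- \<sigma>)) * NB \<le> NQ \<and>
          NQ \<le> ennreal C * ennreal (r powr (- \<sigma>)) * NB))"
proof -
  note n1 = assms(1) and pp = assms(2) and ss = assms(3)
  define \<sigma> where "\<sigma> = (\<Sum>i<n. enn2real (inverse (s i)))"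
  define E where "E = PiE {..<n} (\<lambda>_. {-1,0,1::int})"
  define E' where "E' = PiE {..<n} (\<lambda>_. {0..<int n})"
  have finE: "finite E" "finite E'" by (auto simp: E_def E'_def intro!: finite_PiE)
  have "(\<lambda>i. if i < n then 0 else undefined) \<in> E" by (auto simp: E_def PiE_iff extensional_def)
  then have cE: "0 < card E" using finE by (auto simp: card_gt_0_iff)
  have "(\<lambda>i. if i < n then 0 else undefined) \<in> E'" using n1 by (auto simp: E'_def PiE_iff extensional_def)
  then have cE': "0 < card E'" using finE by (auto simp: card_gt_0_iff)
  define K1 :: real where "K1 = 4 ^ (card E * n)"
  define K2 :: real where "K2 = 4 ^ (card E' * n)"
  have K: "0 < K1" "0 < K2" by (auto simp: K1_def K2_def)
  define C0 :: real where "C0 = K1 * K1 * real (card E)"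
  define C1 :: real where "C1 = K2 * K2 * real (card E') * real n powr \<sigma>"
  have C0: "0 < C0" using K cE by (simp add: C0_def)
  have C1: "0 < C1" using K cE' n1 by (simp add: C1_def)
  define c where "c = min (1 / C0) C1"
  have c: "0 < c" "c \<le> C1" "c \<le> 1 / C0" using C0 C1 by (auto simp: c_def)
  have main: "ennreal c * ennreal (r powr (- \<sigma>)) * NB \<le> NQ \<and> NQ \<le> ennreal C1 * ennreal (r powr (- \<sigma>)) * NB"
    if f: "L1loc n f" and r: "0 < r"
      and NB: "NB = Lmixed n s (\<lambda>y. Lmixed n p (\<lambda>x. indicator (ballN n y r) x * ennreal (cmod (f x))))"
      and NQ: "NQ = lmixed n s (\<lambda>k. Lmixed n p (\<lambda>x. indicator (cubeN n r k) x * ennreal (cmod (f x))))"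
    for f r NB NQ
  proof -
    have fm[measurable]: "f \<in> borel_measurable (Rn n)" using f by (simp add: L1loc_def)
    define g where "g x = ennreal (cmod (f x))" for x
    define a where "a \<rho> k = Lmixed n p (\<lambda>x. indicator (cubeN n \<rho> k) x * g x)" for \<rho> k
    define \<Phi> where "\<Phi> y = Lmixed n p (\<lambda>x. indicator (ballN n y r) x * g x)" for y
    have NB': "NB = Lmixed n s \<Phi>" unfolding NB \<Phi>_def g_def ..
    have NQ': "NQ = lmixed n s (a r)" unfolding NQ a_def g_def ..
    have gm: "(\<lambda>x. indicator (cubeN n \<rho> k) x * g x) \<in> borel_measurable (Rn n)" for \<rho> k
      unfolding g_def by measurable
    have pb: "indicator (ballN n y r) x * g x
        \<le> (\<Sum>e\<in>E. indicator (cubeN n r (dil n 1 e (kmap r n y))) x * g x)" for x y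
    proof (cases "x \<in> ballN n y r")
      case True
      then obtain e where e: "e \<in> E" "x \<in> cubeN n r (dil n 1 e (kmap r n y))"
        using ball_in_cubes[OF _ r] unfolding E_def by blast
      have "indicator (ballN n y r) x * g x = indicator (cubeN n r (dil n 1 e (kmap r n y))) x * g x"
        using True e by simp
      also have "\<dots> \<le> (\<Sum>e\<in>E. indicator (cubeN n r (dil n 1 e (kmap r n y))) x * g x)"
        using e finE by (intro member_le_sum) auto
      finally show ?thesis .
    qed simp
    have \<Phi>_le: "\<Phi> y \<le> ennreal K1 * (\<Sum>e\<in>E. a r (dil n 1 e (kmap r n y)))" for y
    proof -
      have "\<Phi> y \<le> Lmixed n p (\<lambda>x. \<Sum>e\<in>E. indicator (cubeN n r (dil n 1 e (kmap r n y))) x * g x)"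
        unfolding \<Phi>_def using pb pp by (intro Lmixed_mono) auto
      also have "\<dots> \<le> ennreal K1 * (\<Sum>e\<in>E. a r (dil n 1 e (kmap r n y)))"
        unfolding K1_def a_def using finE gm pp by (intro Lmixed_sum) auto
      finally show ?thesis .
    qed
    define A1 where "A1 k = ennreal K1 * (\<Sum>e\<in>E. a r (dil n 1 e k))" for k
    have "NB \<le> Lmixed n s (\<lambda>y. A1 (kmap r n y))"
      unfolding NB' A1_def using \<Phi>_le ss by (intro Lmixed_mono) auto
    also have "\<dots> = ennreal (r powr \<sigma>) * lmixed n s A1"
      unfolding \<sigma>_def by (rule Lmixed_step[OF r ss])
    also have "lmixed n s A1 = ennreal K1 * lmixed n s (\<lambda>k. \<Sum>e\<in>E. a r (dil n 1 e k))"
      unfolding A1_def using K ss by (intro lmixed_cmult) auto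
    also have "lmixed n s (\<lambda>k. \<Sum>e\<in>E. a r (dil n 1 e k))
        \<le> ennreal K1 * (\<Sum>e\<in>E. lmixed n s (\<lambda>k. a r (dil n 1 e k)))"
      unfolding K1_def using finE ss by (intro lmixed_sum) auto
    also have "(\<Sum>e\<in>E. lmixed n s (\<lambda>k. a r (dil n 1 e k))) \<le> (\<Sum>e\<in>E. NQ)"
      unfolding NQ' using ss by (intro sum_mono lmixed_dilate) auto
    finally have lowB: "NB \<le> ennreal (r powr \<sigma>) * (ennreal K1 * (ennreal K1 * (of_nat (card E) * NQ)))"
      by (simp add: mult_left_mono)
    have one: "ennreal (1 / C0) * ennreal (r powr (- \<sigma>)) * (ennreal (r powr \<sigma>) * (ennreal K1 * (ennreal K1 * (of_nat (card E) * NQ)))) = NQ"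
    proof -
      define Y where "Y = r powr \<sigma> * K1 * K1 * real (card E)"
      have Y: "0 \<le> Y" using K by (simp add: Y_def)
      have X1: "(1 / C0) * (r powr (- \<sigma>) * Y) = 1"
        using C0 r K cE by (simp add: Y_def C0_def powr_minus field_simps)
      have e1: "ennreal (r powr \<sigma>) * (ennreal K1 * (ennreal K1 * (of_nat (card E) * NQ))) = ennreal Y * NQ"
        unfolding Y_def using K by (intro ennreal_mult4) auto
      have "ennreal (1 / C0) * ennreal (r powr (- \<sigma>)) * (ennreal Y * NQ)
          = ennreal (1 / C0) * (ennreal (r powr (- \<sigma>)) * (ennreal Y * NQ))" by (simp only: mult.assoc)
      also have "\<dots> = ennreal (1 / C0) * (ennreal (r powr (- \<sigma>) * Y) * NQ)"
        using Y by (subst ennreal_mult2) auto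
      also have "\<dots> = ennreal ((1 / C0) * (r powr (- \<sigma>) * Y)) * NQ"
        using Y C0 by (subst ennreal_mult2) auto
      also have "\<dots> = NQ" unfolding X1 by simp
      finally show ?thesis unfolding e1 .
    qed
    have low: "ennreal c * ennreal (r powr (- \<sigma>)) * NB \<le> NQ"
    proof -
      have "ennreal c * ennreal (r powr (- \<sigma>)) * NB \<le> ennreal (1 / C0) * ennreal (r powr (- \<sigma>)) * NB"
        using c by (intro mult_right_mono ennreal_leI) auto
      also have "\<dots> \<le> ennreal (1 / C0) * ennreal (r powr (- \<sigma>)) * (ennreal (r powr \<sigma>) * (ennreal K1 * (ennreal K1 * (of_nat (card E) * NQ))))"
        using lowB by (intro mult_left_mono) auto
      finally show ?thesis unfolding one .
    qed
    define \<rho> where "\<rho> = r / real n"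
    have \<rho>: "0 < \<rho>" using r n1 by (simp add: \<rho>_def)
    have pc: "indicator (cubeN n r k) x * g x
        \<le> (\<Sum>e\<in>E'. indicator (cubeN n \<rho> (dil n (int n) e k)) x * g x)" for x k
    proof (cases "x \<in> cubeN n r k")
      case True
      then obtain e where e: "e \<in> E'" "x \<in> cubeN n \<rho> (dil n (int n) e k)"
        using cube_in_subcubes[OF _ r n1] unfolding E'_def \<rho>_def by blast
      have "indicator (cubeN n r k) x * g x = indicator (cubeN n \<rho> (dil n (int n) e k)) x * g x"
        using True e by simp
      also have "\<dots> \<le> (\<Sum>e\<in>E'. indicator (cubeN n \<rho> (dil n (int n) e k)) x * g x)"
        using e finE by (intro member_le_sum) auto
      finally show ?thesis .
    qed simp
    have a_le: "a r k \<le> ennreal K2 * (\<Sum>e\<in>E'. a \<rho> (dil n (int n) e k))" for k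
    proof -
      have "a r k \<le> Lmixed n p (\<lambda>x. \<Sum>e\<in>E'. indicator (cubeN n \<rho> (dil n (int n) e k)) x * g x)"
        unfolding a_def using pc pp by (intro Lmixed_mono) auto
      also have "\<dots> \<le> ennreal K2 * (\<Sum>e\<in>E'. a \<rho> (dil n (int n) e k))"
        unfolding K2_def a_def using finE gm pp by (intro Lmixed_sum) auto
      finally show ?thesis .
    qed
    have "NQ \<le> lmixed n s (\<lambda>k. ennreal K2 * (\<Sum>e\<in>E'. a \<rho> (dil n (int n) e k)))"
      unfolding NQ' using a_le ss by (intro lmixed_mono) auto
    also have "\<dots> = ennreal K2 * lmixed n s (\<lambda>k. \<Sum>e\<in>E'. a \<rho> (dil n (int n) e k))"
      using K ss by (intro lmixed_cmult) auto
    also have "lmixed n s (\<lambda>k. \<Sum>e\<in>E'. a \<rho> (dil n (int n) e k))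
        \<le> ennreal K2 * (\<Sum>e\<in>E'. lmixed n s (\<lambda>k. a \<rho> (dil n (int n) e k)))"
      unfolding K2_def using finE ss by (intro lmixed_sum) auto
    also have "(\<Sum>e\<in>E'. lmixed n s (\<lambda>k. a \<rho> (dil n (int n) e k))) \<le> (\<Sum>e\<in>E'. lmixed n s (a \<rho>))"
      using ss n1 by (intro sum_mono lmixed_dilate) auto
    finally have up1: "NQ \<le> ennreal K2 * (ennreal K2 * (of_nat (card E') * lmixed n s (a \<rho>)))"
      by (simp add: mult_left_mono)
    have "ennreal (\<rho> powr \<sigma>) * lmixed n s (a \<rho>) = Lmixed n s (\<lambda>y. a \<rho> (kmap \<rho> n y))"
      unfolding \<sigma>_def by (rule Lmixed_step[OF \<rho> ss, symmetric])
    also have "\<dots> \<le> NB"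
      unfolding NB'
    proof (intro Lmixed_mono ss)
      fix y
      show "a \<rho> (kmap \<rho> n y) \<le> \<Phi> y"
        unfolding a_def \<Phi>_def
      proof (intro Lmixed_mono pp)
        fix x
        have "x \<in> cubeN n \<rho> (kmap \<rho> n y) \<Longrightarrow> x \<in> ballN n y r"
          using cube_in_ball[OF _ r n1] by (simp add: \<rho>_def)
        then show "indicator (cubeN n \<rho> (kmap \<rho> n y)) x * g x \<le> indicator (ballN n y r) x * g x"
          by (auto simp: indicator_def)
      qed
    qed
    finally have bnd: "ennreal (\<rho> powr \<sigma>) * lmixed n s (a \<rho>) \<le> NB" .
    have lb: "lmixed n s (a \<rho>) \<le> ennreal (\<rho> powr (- \<sigma>)) * NB"
    proof -
      have "lmixed n s (a \<rho>) = ennreal (\<rho> powr (- \<sigma>)) * (ennreal (\<rho> powr \<sigma>) * lmixed n s (a \<rho>))"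
      proof -
        have "\<rho> powr (- \<sigma>) * \<rho> powr \<sigma> = 1" using \<rho> by (simp add: powr_minus)
        then have "ennreal (\<rho> powr (- \<sigma>)) * ennreal (\<rho> powr \<sigma>) = 1"
          by (simp add: ennreal_mult[symmetric] del: ennreal_mult')
        then show ?thesis by (simp add: mult.assoc[symmetric])
      qed
      also have "\<dots> \<le> ennreal (\<rho> powr (- \<sigma>)) * NB"
        using bnd by (intro mult_left_mono) auto
      finally show ?thesis .
    qed
    have rho_pow: "\<rho> powr (- \<sigma>) = r powr (- \<sigma>) * real n powr \<sigma>"
    proof -
      have "\<rho> powr \<sigma> = r powr \<sigma> / real n powr \<sigma>" using r n1 by (simp add: \<rho>_def powr_divide)
      moreover have "0 < \<rho> powr \<sigma>" "0 < real n powr \<sigma>" using \<rho> n1 by auto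
      ultimately show ?thesis using r n1 by (simp add: powr_minus field_simps)
    qed
    have "NQ \<le> ennreal K2 * (ennreal K2 * (of_nat (card E') * (ennreal (\<rho> powr (- \<sigma>)) * NB)))"
      using up1 lb by (meson mult_left_mono order_trans zero_le)
    also have "\<dots> = ennreal C1 * ennreal (r powr (- \<sigma>)) * NB"
      using K r n1 unfolding C1_def rho_pow
      by (simp add: ennreal_mult ennreal_of_nat_eq_real_of_nat mult.assoc mult.left_commute)
    finally show ?thesis using low by blast
  qed
  show ?thesis
    apply (rule exI[of _ c], rule exI[of _ C1])
    using c main by (simp add: Let_def \<sigma>_def)
qed

end
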